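(* Let $T$ be an operator function on an interval $\Delta$ satisfying (A1)–(A3). Let $\lambda_1,\dots,\lambda_m$ be eigenvalues of $T$ with eigenvectors $u_1,\dots,u_m$ (i.e. $u_j\ne0$, $T(\lambda_j)u_j=0$), and let $\mu,\nu\in\Delta$ with $\mu\le\lambda_1\le\dots\le\lambda_m\le\nu$. Let $y\in\mathcal D$ and $c_1,\dots,c_m\in\mathbb C$. (i) If $\mathfrak t(\nu)[y]\ge0$, then $\mathfrak t(\mu)[y+c_1u_1+\dots+c_mu_m]\ge0$. (ii) If $\mathfrak t(\mu)[y]\le0$, then $\mathfrak t(\nu)[y+c_1u_1+\dots+c_mu_m]\le0$.
   Context: For a self-adjoint operator $A$ with spectral measure $E$, its form is $\mathfrak a[x,y]=\int_{\mathbb R}\mu\,d\langle E(\mu)x,y\rangle$ on $\mathrm{dom}(|A|^{1/2})$, $\mathfrak a[x]:=\mathfrak a[x,x]$. (A1) $T(\lambda)$ self-adjoint for each $\lambda\in\Delta$, with form $\mathfrak t(\lambda)$; (A2) $\mathrm{dom}\,\mathfrak t(\lambda)=:\mathcal D$ independent of $\lambda$; (A3) for each $x\in\mathcal D\setminus\{0\}$, $\lambda\mapsto\mathfrak t(\lambda)[x]$ is continuous, and if $\mathfrak t(\lambda_0)[x]=0$ then $\mathfrak t(\lambda)[x]>0$ for $\lambda<\lambda_0$ and $<0$ for $\lambda>\lambda_0$ ($\lambda\in\Delta$). *)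

theory Defs
  imports "HOL-Analysis.Analysis"
begin

definition hnorm :: "('h \<Rightarrow> 'h \<Rightarrow> complex) \<Rightarrow> 'h \<Rightarrow> real" where
  "hnorm ip x = sqrt (Re (ip x x))"

definition complex_hilbert ::
  "(complex \<Rightarrow> 'h::ab_group_add \<Rightarrow> 'h) \<Rightarrow> ('h \<Rightarrow> 'h \<Rightarrow> complex) \<Rightarrow> bool" where
  "complex_hilbert sm ip \<longleftrightarrow>
     (\<forall>a x y. sm a (x + y) = sm a x + sm a y) \<and>
     (\<forall>a b x. sm (a + b) x = sm a x + sm b x) \<and>
     (\<forall>a b x. sm a (sm b x) = sm (a * b) x) \<and>
     (\<forall>x. sm 1 x = x) \<and>
     (\<forall>x y z. ip (x + y) z = ip x z + ip y z) \<and>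
     (\<forall>a x y. ip (sm a x) y = a * ip x y) \<and>
     (\<forall>x y. ip y x = cnj (ip x y)) \<and>
     (\<forall>x. Re (ip x x) \<ge> 0) \<and>
     (\<forall>x. ip x x = 0 \<longrightarrow> x = 0) \<and>
     (\<forall>X :: nat \<Rightarrow> 'h.
        (\<forall>e>0. \<exists>N. \<forall>m\<ge>N. \<forall>n\<ge>N. hnorm ip (X m - X n) < e) \<longrightarrow>
        (\<exists>L. (\<lambda>n. hnorm ip (X n - L)) \<longlonglongrightarrow> 0))"

definition spectral_measure ::
  "(complex \<Rightarrow> 'h::ab_group_add \<Rightarrow> 'h) \<Rightarrow> ('h \<Rightarrow> 'h \<Rightarrow> complex) \<Rightarrow> (real set \<Rightarrow> 'h \<Rightarrow> 'h) \<Rightarrow> bool" where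
  "spectral_measure sm ip E \<longleftrightarrow>
     (\<forall>B\<in>sets borel. \<forall>x y. E B (x + y) = E B x + E B y) \<and>
     (\<forall>B\<in>sets borel. \<forall>a x. E B (sm a x) = sm a (E B x)) \<and>
     (\<forall>B\<in>sets borel. \<forall>x. E B (E B x) = E B x) \<and>
     (\<forall>B\<in>sets borel. \<forall>x y. ip (E B x) y = ip x (E B y)) \<and>
     (\<forall>B\<in>sets borel. \<forall>C\<in>sets borel. \<forall>x. E (B \<inter> C) x = E B (E C x)) \<and>
     (\<forall>x. E {} x = 0) \<and>
     (\<forall>x. E UNIV x = x) \<and>
     (\<forall>Bs :: nat \<Rightarrow> real set. range Bs \<subseteq> sets borel \<longrightarrow> disjoint_family Bs \<longrightarrow>
        (\<forall>x y. (\<lambda>n. ip (E (Bs n) x) y) sums ip (E (\<Union>(range Bs)) x) y))"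

definition spec_meas :: "('h \<Rightarrow> 'h \<Rightarrow> complex) \<Rightarrow> (real set \<Rightarrow> 'h \<Rightarrow> 'h) \<Rightarrow> 'h \<Rightarrow> real measure" where
  "spec_meas ip E x = measure_of UNIV (sets borel) (\<lambda>B. ennreal (Re (ip (E B x) x)))"

text \<open>Domain of the form: dom(|A|^(1/2)) = {x. \<integral>|\<mu>| d\<langle>E(\<mu>)x,x\<rangle> < \<infinity>}.\<close>

definition form_dom :: "('h \<Rightarrow> 'h \<Rightarrow> complex) \<Rightarrow> (real set \<Rightarrow> 'h \<Rightarrow> 'h) \<Rightarrow> 'h set" where
  "form_dom ip E = {x. integrable (spec_meas ip E x) (\<lambda>\<mu>. \<mu>)}"

definition form_q :: "('h \<Rightarrow> 'h \<Rightarrow> complex) \<Rightarrow> (real set \<Rightarrow> 'h \<Rightarrow> 'h) \<Rightarrow> 'h \<Rightarrow> real" where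
  "form_q ip E x = integral\<^sup>L (spec_meas ip E x) (\<lambda>\<mu>. \<mu>)"

text \<open>Sesquilinear form a[x,y] = \<integral> \<mu> d\<langle>E(\<mu>)x,y\<rangle>, written via polarisation of the
  complex measure \<langle>E(.)x,y\<rangle> (valid for x, y in the form domain).\<close>

definition form :: "(complex \<Rightarrow> 'h::ab_group_add \<Rightarrow> 'h) \<Rightarrow> ('h \<Rightarrow> 'h \<Rightarrow> complex) \<Rightarrow>
    (real set \<Rightarrow> 'h \<Rightarrow> 'h) \<Rightarrow> 'h \<Rightarrow> 'h \<Rightarrow> complex" where
  "form sm ip E x y = (\<Sum>k<(4::nat). \<i> ^ k * complex_of_real (form_q ip E (x + sm (\<i> ^ k) y))) / 4"

text \<open>The self-adjoint operator A = \<integral> \<mu> dE(\<mu>), given by its graph: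
  dom A = {x. \<integral> mu^2 d\<langle>E(\<mu>)x,x\<rangle> < \<infinity>}, and Ax is the vector z with
  \<langle>z,y\<rangle> = \<integral> \<mu> d\<langle>E(\<mu>)x,y\<rangle> (tested on the dense subspace form_dom).\<close>

definition op_dom :: "('h \<Rightarrow> 'h \<Rightarrow> complex) \<Rightarrow> (real set \<Rightarrow> 'h \<Rightarrow> 'h) \<Rightarrow> 'h set" where
  "op_dom ip E = {x. integrable (spec_meas ip E x) (\<lambda>\<mu>. \<mu>\<^sup>2)}"

definition op_graph :: "(complex \<Rightarrow> 'h::ab_group_add \<Rightarrow> 'h) \<Rightarrow> ('h \<Rightarrow> 'h \<Rightarrow> complex) \<Rightarrow>
    (real set \<Rightarrow> 'h \<Rightarrow> 'h) \<Rightarrow> ('h \<times> 'h) set" where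
  "op_graph sm ip E = {(x, z). x \<in> op_dom ip E \<and> (\<forall>y\<in>form_dom ip E. ip z y = form sm ip E x y)}"

end

theory Submission
  imports Defs
begin


lemma nn_lin4:
  assumes s: "sets M1 = sets M" "sets M2 = sets M" "sets N1 = sets M" "sets N2 = sets M"
  and e: "\<And>A. A \<in> sets M \<Longrightarrow> emeasure M1 A + emeasure M2 A = k1 * emeasure N1 A + k2 * emeasure N2 A"
  and f: "f \<in> borel_measurable M"
  shows "(\<integral>\<^sup>+x. f x \<partial>M1) + (\<integral>\<^sup>+x. f x \<partial>M2) = k1 * (\<integral>\<^sup>+x. f x \<partial>N1) + k2 * (\<integral>\<^sup>+x. f x \<partial>N2)"
  using f
proof induction
  case (cong f g)
  have sp: "space M1 = space M" "space M2 = space M" "space N1 = space M" "space N2 = space M"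
    using s sets_eq_imp_space_eq by blast+
  have "\<And>K. space K = space M \<Longrightarrow> (\<integral>\<^sup>+x. f x \<partial>K) = (\<integral>\<^sup>+x. g x \<partial>K)"
    by (rule nn_integral_cong) (use cong in auto)
  then show ?case using cong sp by simp
next
  case (set A)
  then show ?case using s e by simp
next
  case (mult u c)
  have m: "u \<in> borel_measurable M1" "u \<in> borel_measurable M2" "u \<in> borel_measurable N1" "u \<in> borel_measurable N2"
    using mult s by (simp_all cong: measurable_cong_sets)
  show ?case using mult(4) m
    by (simp add: nn_integral_cmult distrib_left[symmetric] mult.left_commute)
next
  case (add u v)
  have m: "u \<in> borel_measurable M1" "u \<in> borel_measurable M2" "u \<in> borel_measurable N1" "u \<in> borel_measurable N2"
          "v \<in> borel_measurable M1" "v \<in> borel_measurable M2" "v \<in> borel_measurable N1" "v \<in> borel_measurable N2"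
    using add s by (simp_all cong: measurable_cong_sets)
  have "(\<integral>\<^sup>+x. v x + u x \<partial>M1) + (\<integral>\<^sup>+x. v x + u x \<partial>M2)
     = ((\<integral>\<^sup>+x. v x \<partial>M1) + (\<integral>\<^sup>+x. v x \<partial>M2)) + ((\<integral>\<^sup>+x. u x \<partial>M1) + (\<integral>\<^sup>+x. u x \<partial>M2))"
    using m by (simp add: nn_integral_add add_ac)
  also have "\<dots> = (k1 * (\<integral>\<^sup>+x. v x \<partial>N1) + k2 * (\<integral>\<^sup>+x. v x \<partial>N2)) + (k1 * (\<integral>\<^sup>+x. u x \<partial>N1) + k2 * (\<integral>\<^sup>+x. u x \<partial>N2))"
    using add by simp
  also have "\<dots> = k1 * (\<integral>\<^sup>+x. v x + u x \<partial>N1) + k2 * (\<integral>\<^sup>+x. v x + u x \<partial>N2)"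
    using m by (simp add: nn_integral_add distrib_left add_ac)
  finally show ?case .
next
  case (seq U)
  have m: "\<And>i. U i \<in> borel_measurable M1" "\<And>i. U i \<in> borel_measurable M2" "\<And>i. U i \<in> borel_measurable N1" "\<And>i. U i \<in> borel_measurable N2"
    using seq s by (simp_all cong: measurable_cong_sets)
  have incU: "\<And>m n x. m \<le> n \<Longrightarrow> U m x \<le> U n x" using \<open>incseq U\<close> by (simp add: incseq_def le_fun_def)
  have inc: "\<And>K. (\<And>i. U i \<in> borel_measurable K) \<Longrightarrow> incseq (\<lambda>i. \<integral>\<^sup>+x. U i x \<partial>K)"
    using incU by (auto simp: incseq_def le_fun_def intro!: nn_integral_mono)
  have inc2: "\<And>K k. (\<And>i. U i \<in> borel_measurable K) \<Longrightarrow> incseq (\<lambda>i. k * \<integral>\<^sup>+x. U i x \<partial>K)"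
    using incU by (auto simp: incseq_def le_fun_def intro!: nn_integral_mono mult_left_mono)
  have "\<And>K. (\<And>i. U i \<in> borel_measurable K) \<Longrightarrow> (\<integral>\<^sup>+x. (SUP i. U i) x \<partial>K) = (SUP i. \<integral>\<^sup>+x. U i x \<partial>K)"
    using \<open>incseq U\<close> nn_integral_monotone_convergence_SUP[of U] by (simp add: image_comp)
  then have "(\<integral>\<^sup>+x. (SUP i. U i) x \<partial>M1) + (\<integral>\<^sup>+x. (SUP i. U i) x \<partial>M2)
     = (SUP i. (\<integral>\<^sup>+x. U i x \<partial>M1) + (\<integral>\<^sup>+x. U i x \<partial>M2))"
     and "k1 * (\<integral>\<^sup>+x. (SUP i. U i) x \<partial>N1) + k2 * (\<integral>\<^sup>+x. (SUP i. U i) x \<partial>N2)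
     = (SUP i. k1 * (\<integral>\<^sup>+x. U i x \<partial>N1) + k2 * (\<integral>\<^sup>+x. U i x \<partial>N2))"
    using m inc inc2 by (simp_all add: ennreal_SUP_add SUP_mult_left_ennreal)
  then show ?case using seq.IH by simp
qed




context
  fixes sm :: "complex \<Rightarrow> 'h::ab_group_add \<Rightarrow> 'h" and ip :: "'h \<Rightarrow> 'h \<Rightarrow> complex"
  assumes H: "complex_hilbert sm ip"
begin

lemma sm_add_right: "sm a (x + y) = sm a x + sm a y" using H unfolding complex_hilbert_def by (elim conjE allE) assumption
lemma sm_add_left: "sm (a + b) x = sm a x + sm b x" using H unfolding complex_hilbert_def by (elim conjE allE) assumption
lemma sm_sm: "sm a (sm b x) = sm (a * b) x" using H unfolding complex_hilbert_def by (elim conjE allE) assumption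
lemma sm_one: "sm 1 x = x" using H unfolding complex_hilbert_def by (elim conjE allE) assumption
lemma ip_add_left: "ip (x + y) z = ip x z + ip y z" using H unfolding complex_hilbert_def by (elim conjE allE) assumption
lemma ip_sm_left: "ip (sm a x) y = a * ip x y" using H unfolding complex_hilbert_def by (elim conjE allE) assumption
lemma ip_sym: "ip y x = cnj (ip x y)" using H unfolding complex_hilbert_def by (elim conjE allE) assumption
lemma ip_pos: "Re (ip x x) \<ge> 0" using H unfolding complex_hilbert_def by (elim conjE allE) assumption

lemma sm_zero: "sm 0 x = 0"
proof -
  have "sm (0+0) x = sm 0 x + sm 0 x" by (rule sm_add_left)
  then show ?thesis by simp
qed

lemma sm_uminus: "sm (- a) x = - sm a x"
proof -
  have "sm (a + - a) x = sm a x + sm (-a) x" by (rule sm_add_left)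
  then have "sm a x + sm (-a) x = 0" by (simp add: sm_zero)
  then show ?thesis by (simp add: eq_neg_iff_add_eq_0 add.commute)
qed

lemma sm_minus_one: "sm (-1) x = - x" by (simp add: sm_uminus sm_one)

lemma sm_zero_right: "sm a 0 = 0"
proof -
  have "sm a (0+0) = sm a 0 + sm a 0" by (rule sm_add_right)
  then show ?thesis by simp
qed

lemma sm_neg_right: "sm a (- x) = - sm a x"
proof -
  have "sm a (x + - x) = sm a x + sm a (-x)" by (rule sm_add_right)
  then have "sm a x + sm a (-x) = 0" by (simp add: sm_zero_right)
  then show ?thesis by (simp add: eq_neg_iff_add_eq_0 add.commute)
qed

lemma ip_zero_left: "ip 0 z = 0"
proof -
  have "ip (0+0) z = ip 0 z + ip 0 z" by (rule ip_add_left)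
  then show ?thesis by simp
qed

lemma ip_neg_left: "ip (- x) z = - ip x z"
proof -
  have "ip (x + - x) z = ip x z + ip (-x) z" by (rule ip_add_left)
  then have "ip x z + ip (-x) z = 0" by (simp add: ip_zero_left)
  then show ?thesis by (simp add: eq_neg_iff_add_eq_0 add.commute)
qed

lemma ip_diff_left: "ip (x - y) z = ip x z - ip y z"
  using ip_add_left[of x "-y" z] by (simp add: ip_neg_left)

lemma ip_add_right: "ip z (x + y) = ip z x + ip z y"
  by (metis ip_sym ip_add_left complex_cnj_add)

lemma ip_neg_right: "ip z (- x) = - ip z x"
  by (metis ip_sym ip_neg_left complex_cnj_minus)

lemma ip_diff_right: "ip z (x - y) = ip z x - ip z y"
  using ip_add_right[of z x "-y"] by (simp add: ip_neg_right)

lemma ip_sm_right: "ip x (sm a y) = cnj a * ip x y"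
  by (metis ip_sym ip_sm_left complex_cnj_mult)

context
  fixes E :: "real set \<Rightarrow> 'h \<Rightarrow> 'h"
  assumes S: "spectral_measure sm ip E"
begin

lemma E_add: "B \<in> sets borel \<Longrightarrow> E B (x + y) = E B x + E B y" using S unfolding spectral_measure_def by (elim conjE) simp
lemma E_sm: "B \<in> sets borel \<Longrightarrow> E B (sm a x) = sm a (E B x)" using S unfolding spectral_measure_def by (elim conjE) simp
lemma E_idem: "B \<in> sets borel \<Longrightarrow> E B (E B x) = E B x" using S unfolding spectral_measure_def by (elim conjE) simp
lemma E_sa: "B \<in> sets borel \<Longrightarrow> ip (E B x) y = ip x (E B y)" using S unfolding spectral_measure_def by (elim conjE) simp
lemma E_empty: "E {} x = 0" using S unfolding spectral_measure_def by (elim conjE) simp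
lemma E_ca: "range Bs \<subseteq> sets borel \<Longrightarrow> disjoint_family Bs \<Longrightarrow>
        (\<lambda>n. ip (E (Bs n) x) y) sums ip (E (\<Union>(range Bs)) x) y" using S unfolding spectral_measure_def by (elim conjE) simp

lemma E_neg: "B \<in> sets borel \<Longrightarrow> E B (- x) = - E B x"
proof -
  assume B: "B \<in> sets borel"
  have "E B (x + - x) = E B x + E B (-x)" by (rule E_add[OF B])
  moreover have "E B 0 = 0" using E_add[OF B, of 0 0] by simp
  ultimately have "E B x + E B (-x) = 0" by simp
  then show ?thesis by (simp add: eq_neg_iff_add_eq_0 add.commute)
qed

lemma E_diff: "B \<in> sets borel \<Longrightarrow> E B (x - y) = E B x - E B y"
  using E_add[of B x "-y"] E_neg[of B y] by simp

lemma f_nonneg: "B \<in> sets borel \<Longrightarrow> Re (ip (E B x) x) \<ge> 0"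
  using E_idem[of B x] E_sa[of B "E B x" x] ip_pos[of "E B x"] by simp

lemma f_par: "B \<in> sets borel \<Longrightarrow>
  Re (ip (E B (x + y)) (x + y)) + Re (ip (E B (x - y)) (x - y)) = 2 * Re (ip (E B x) x) + 2 * Re (ip (E B y) y)"
proof -
  assume B: "B \<in> sets borel"
  have "ip (E B (x + y)) (x + y) + ip (E B (x - y)) (x - y) = 2 * ip (E B x) x + 2 * ip (E B y) y"
  proof -
    have "ip (E B (x + y)) (x + y) = ip (E B x) x + ip (E B x) y + (ip (E B y) x + ip (E B y) y)"
      unfolding E_add[OF B] ip_add_left ip_add_right by (simp add: add_ac)
    moreover have "ip (E B (x - y)) (x - y) = ip (E B x) x - ip (E B x) y - (ip (E B y) x - ip (E B y) y)"
      unfolding E_diff[OF B] ip_diff_left ip_diff_right by (simp add: algebra_simps)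
    ultimately show ?thesis by simp
  qed
  from arg_cong[where f=Re, OF this] show ?thesis by simp
qed

lemma f_hom: "B \<in> sets borel \<Longrightarrow> Re (ip (E B (sm a x)) (sm a x)) = (cmod a)^2 * Re (ip (E B x) x)"
proof -
  assume B: "B \<in> sets borel"
  have "ip (E B (sm a x)) (sm a x) = (a * cnj a) * ip (E B x) x"
    by (simp add: E_sm[OF B] ip_sm_left ip_sm_right)
  also have "a * cnj a = complex_of_real ((cmod a)^2)" by (metis complex_norm_square)
  finally show ?thesis by simp
qed

lemma sets_spec: "sets (spec_meas ip E x) = sets borel"
  using sets.sigma_sets_eq[of borel] unfolding spec_meas_def by (simp add: sets_measure_of)

lemma emeasure_spec: "B \<in> sets borel \<Longrightarrow> emeasure (spec_meas ip E x) B = ennreal (Re (ip (E B x) x))"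
  unfolding spec_meas_def
proof (rule emeasure_measure_of_sigma)
  show "sigma_algebra UNIV (sets borel)"
    by (metis sets.sigma_algebra_axioms space_borel)
  show "positive (sets borel) (\<lambda>B. ennreal (Re (ip (E B x) x)))"
    by (simp add: positive_def E_empty ip_zero_left)
  show "countably_additive (sets borel) (\<lambda>B. ennreal (Re (ip (E B x) x)))"
  proof (rule countably_additiveI)
    fix A :: "nat \<Rightarrow> real set" assume A: "range A \<subseteq> sets borel" "disjoint_family A" "\<Union>(range A) \<in> sets borel"
    have s: "(\<lambda>n. Re (ip (E (A n) x) x)) sums Re (ip (E (\<Union>(range A)) x) x)"
      using sums_Re[OF E_ca[OF A(1,2)]] by simp
    have nn: "\<And>n. Re (ip (E (A n) x) x) \<ge> 0" using A(1) f_nonneg by auto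
    show "(\<Sum>i. ennreal (Re (ip (E (A i) x) x))) = ennreal (Re (ip (E (\<Union>(range A)) x) x))"
      using suminf_ennreal2[OF nn sums_summable[OF s]] sums_unique[OF s] by simp
  qed
qed

end
end



context
  fixes sm :: "complex \<Rightarrow> 'h::ab_group_add \<Rightarrow> 'h" and ip :: "'h \<Rightarrow> 'h \<Rightarrow> complex"
    and E :: "real set \<Rightarrow> 'h \<Rightarrow> 'h"
  assumes H: "complex_hilbert sm ip"
  assumes S: "spectral_measure sm ip E"
begin

lemma meas_spec: assumes "g \<in> borel_measurable borel" shows "g \<in> borel_measurable (spec_meas ip E x)"
  using assms measurable_cong_sets[OF sets_spec[OF H S, of x] refl] by blast

lemma abs_meas: "(\<lambda>t::real. ennreal \<bar>t\<bar>) \<in> borel_measurable borel"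
  by measurable

lemma nn_par: "g \<in> borel_measurable borel \<Longrightarrow>
  (\<integral>\<^sup>+t. g t \<partial>spec_meas ip E (x + y)) + (\<integral>\<^sup>+t. g t \<partial>spec_meas ip E (x - y))
   = 2 * (\<integral>\<^sup>+t. g t \<partial>spec_meas ip E x) + 2 * (\<integral>\<^sup>+t. g t \<partial>spec_meas ip E y)"
proof (rule nn_lin4[where M=borel])
  fix A :: "real set" assume A: "A \<in> sets borel"
  have nn: "Re (ip (E A z) z) \<ge> 0" for z using f_nonneg[OF H S A] .
  show "emeasure (spec_meas ip E (x + y)) A + emeasure (spec_meas ip E (x - y)) A =
        2 * emeasure (spec_meas ip E x) A + 2 * emeasure (spec_meas ip E y) A"
    using f_par[OF H S A, of x y] nn
    by (simp add: emeasure_spec[OF H S A] ennreal_plus[symmetric] ennreal_mult)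
qed (simp_all add: sets_spec[OF H S])

lemma nn_hom: "g \<in> borel_measurable borel \<Longrightarrow>
  (\<integral>\<^sup>+t. g t \<partial>spec_meas ip E (sm a x)) = ennreal ((cmod a)^2) * (\<integral>\<^sup>+t. g t \<partial>spec_meas ip E x)"
proof -
  assume g: "g \<in> borel_measurable borel"
  have "(\<integral>\<^sup>+t. g t \<partial>spec_meas ip E (sm a x)) + (\<integral>\<^sup>+t. g t \<partial>null_measure borel)
     = ennreal ((cmod a)^2) * (\<integral>\<^sup>+t. g t \<partial>spec_meas ip E x) + 0 * (\<integral>\<^sup>+t. g t \<partial>null_measure borel)"
  proof (rule nn_lin4[where M=borel, OF _ _ _ _ _ g])
    fix A :: "real set" assume A: "A \<in> sets borel"
    have nn: "Re (ip (E A z) z) \<ge> 0" for z using f_nonneg[OF H S A] .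
    show "emeasure (spec_meas ip E (sm a x)) A + emeasure (null_measure borel) A =
        ennreal ((cmod a)^2) * emeasure (spec_meas ip E x) A + 0 * emeasure (null_measure borel) A"
      using f_hom[OF H S A, of a x] nn
      by (simp add: emeasure_spec[OF H S A] ennreal_mult)
  qed (simp_all add: sets_spec[OF H S])
  then show ?thesis by simp
qed

lemma dom_iff: "x \<in> form_dom ip E \<longleftrightarrow> (\<integral>\<^sup>+t. ennreal \<bar>t\<bar> \<partial>spec_meas ip E x) < \<infinity>"
  unfolding form_dom_def using meas_spec[of "\<lambda>t. t" x]
  by (simp add: integrable_iff_bounded)

lemma dom_add: assumes "x \<in> form_dom ip E" "y \<in> form_dom ip E"
  shows "x + y \<in> form_dom ip E" "x - y \<in> form_dom ip E"
proof -
  have e: "(\<integral>\<^sup>+t. ennreal \<bar>t\<bar> \<partial>spec_meas ip E (x + y)) + (\<integral>\<^sup>+t. ennreal \<bar>t\<bar> \<partial>spec_meas ip E (x - y)) < \<infinity>"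
    using assms unfolding dom_iff nn_par[OF abs_meas]
    by (simp add: ennreal_mult_less_top)
  then show "x + y \<in> form_dom ip E" "x - y \<in> form_dom ip E"
    unfolding dom_iff by (simp_all add: less_top[symmetric] )
qed

lemma dom_sm: assumes "x \<in> form_dom ip E" shows "sm a x \<in> form_dom ip E"
  using assms unfolding dom_iff nn_hom[OF abs_meas]
  by (simp add: ennreal_mult_less_top)

end



lemma enn_helper:
  fixes a1 a2 a3 a4 :: ennreal
  assumes "a1 + a2 = 2 * a3 + 2 * a4" "a3 < top" "a4 < top"
  shows "enn2real a1 + enn2real a2 = 2 * enn2real a3 + 2 * enn2real a4"
proof -
  have t: "a1 + a2 < top" using assms by (simp add: ennreal_mult_less_top)
  then have "a1 < top" "a2 < top" by (simp_all add: less_top[symmetric])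
  then have "enn2real a1 + enn2real a2 = enn2real (a1 + a2)" by (simp add: enn2real_plus)
  also have "\<dots> = enn2real (2 * a3 + 2 * a4)" using assms(1) by simp
  also have "\<dots> = 2 * enn2real a3 + 2 * enn2real a4"
    using assms(2,3) by (simp add: enn2real_plus ennreal_mult_less_top enn2real_mult)
  finally show ?thesis .
qed

context
  fixes sm :: "complex \<Rightarrow> 'h::ab_group_add \<Rightarrow> 'h" and ip :: "'h \<Rightarrow> 'h \<Rightarrow> complex"
    and E :: "real set \<Rightarrow> 'h \<Rightarrow> 'h"
  assumes H: "complex_hilbert sm ip"
  assumes S: "spectral_measure sm ip E"
begin

lemma id_meas: "(\<lambda>t::real. ennreal t) \<in> borel_measurable borel" by measurable
lemma nid_meas: "(\<lambda>t::real. ennreal (- t)) \<in> borel_measurable borel" by measurable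

lemma q_decomp: assumes "x \<in> form_dom ip E"
  shows "form_q ip E x = enn2real (\<integral>\<^sup>+t. ennreal t \<partial>spec_meas ip E x) - enn2real (\<integral>\<^sup>+t. ennreal (- t) \<partial>spec_meas ip E x)"
    "(\<integral>\<^sup>+t. ennreal t \<partial>spec_meas ip E x) < \<infinity>" "(\<integral>\<^sup>+t. ennreal (- t) \<partial>spec_meas ip E x) < \<infinity>"
  using assms unfolding form_dom_def form_q_def
  by (auto simp: real_lebesgue_integral_def real_integrable_def less_top[symmetric])

lemma q_par: assumes "x \<in> form_dom ip E" "y \<in> form_dom ip E"
  shows "form_q ip E (x + y) + form_q ip E (x - y) = 2 * form_q ip E x + 2 * form_q ip E y"
proof -
  have d: "x + y \<in> form_dom ip E" "x - y \<in> form_dom ip E" using dom_add[OF H S assms] by auto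
  have p: "enn2real (\<integral>\<^sup>+t. ennreal t \<partial>spec_meas ip E (x + y)) + enn2real (\<integral>\<^sup>+t. ennreal t \<partial>spec_meas ip E (x - y))
     = 2 * enn2real (\<integral>\<^sup>+t. ennreal t \<partial>spec_meas ip E x) + 2 * enn2real (\<integral>\<^sup>+t. ennreal t \<partial>spec_meas ip E y)"
    by (rule enn_helper[OF nn_par[OF H S id_meas]]) (use q_decomp assms in auto)
  have n: "enn2real (\<integral>\<^sup>+t. ennreal (- t) \<partial>spec_meas ip E (x + y)) + enn2real (\<integral>\<^sup>+t. ennreal (- t) \<partial>spec_meas ip E (x - y))
     = 2 * enn2real (\<integral>\<^sup>+t. ennreal (- t) \<partial>spec_meas ip E x) + 2 * enn2real (\<integral>\<^sup>+t. ennreal (- t) \<partial>spec_meas ip E y)"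
    by (rule enn_helper[OF nn_par[OF H S nid_meas]]) (use q_decomp assms in auto)
  show ?thesis using p n q_decomp(1)[OF d(1)] q_decomp(1)[OF d(2)] q_decomp(1)[OF assms(1)] q_decomp(1)[OF assms(2)]
    by simp
qed

lemma q_hom: assumes "x \<in> form_dom ip E"
  shows "form_q ip E (sm a x) = (cmod a)^2 * form_q ip E x"
proof -
  have d: "sm a x \<in> form_dom ip E" using dom_sm[OF H S assms] .
  show ?thesis
    unfolding q_decomp(1)[OF d] q_decomp(1)[OF assms] nn_hom[OF H S id_meas] nn_hom[OF H S nid_meas]
    by (simp add: enn2real_mult right_diff_distrib)
qed

lemma zero_dom: "0 \<in> form_dom ip E"
proof -
  have "sm 0 0 = (0::'h)" by (rule sm_zero[OF H])
  have "(\<integral>\<^sup>+t. ennreal \<bar>t\<bar> \<partial>spec_meas ip E (sm 0 0)) = ennreal ((cmod 0)^2) * (\<integral>\<^sup>+t. ennreal \<bar>t\<bar> \<partial>spec_meas ip E 0)"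
    by (rule nn_hom[OF H S abs_meas[OF H S]])
  then have "(\<integral>\<^sup>+t. ennreal \<bar>t\<bar> \<partial>spec_meas ip E 0) = 0"
    using \<open>sm 0 0 = 0\<close> by simp
  then show ?thesis unfolding dom_iff[OF H S] by simp
qed

lemma q_zero: "form_q ip E 0 = 0"
  using q_hom[OF zero_dom, of 0] sm_zero[OF H, of 0] by simp

lemma opdom_formdom: assumes "u \<in> op_dom ip E" shows "u \<in> form_dom ip E"
proof -
  have i2: "(\<integral>\<^sup>+t. ennreal (t\<^sup>2) \<partial>spec_meas ip E u) < \<infinity>"
    using assms unfolding op_dom_def by (simp add: integrable_iff_bounded)
  have sp: "space (spec_meas ip E u) = UNIV"
    using sets_eq_imp_space_eq[OF sets_spec[OF H S, of u]] by simp
  have fin: "emeasure (spec_meas ip E u) UNIV < \<infinity>"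
    using emeasure_spec[OF H S, of UNIV u] by simp
  have b: "\<bar>t\<bar> \<le> 1 + t\<^sup>2" for t :: real
  proof -
    have "0 \<le> (\<bar>t\<bar> - 1)\<^sup>2" by simp
    then have "2 * \<bar>t\<bar> \<le> 1 + \<bar>t\<bar>\<^sup>2" by (simp add: power2_eq_square algebra_simps)
    then show ?thesis by simp
  qed
  have b2: "ennreal \<bar>t\<bar> \<le> 1 + ennreal (t\<^sup>2)" for t :: real
  proof -
    have "ennreal \<bar>t\<bar> \<le> ennreal (1 + t\<^sup>2)" by (rule ennreal_leI[OF b])
    also have "\<dots> = ennreal 1 + ennreal (t\<^sup>2)" by (rule ennreal_plus) auto
    finally show ?thesis by simp
  qed
  have "(\<integral>\<^sup>+t. ennreal \<bar>t\<bar> \<partial>spec_meas ip E u) \<le> (\<integral>\<^sup>+t. 1 + ennreal (t\<^sup>2) \<partial>spec_meas ip E u)"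
    by (rule nn_integral_mono) (rule b2)
  also have "\<dots> = (\<integral>\<^sup>+t. 1 \<partial>spec_meas ip E u) + (\<integral>\<^sup>+t. ennreal (t\<^sup>2) \<partial>spec_meas ip E u)"
    by (rule nn_integral_add) (simp_all add: meas_spec[OF H S])
  also have "(\<integral>\<^sup>+t. 1 \<partial>spec_meas ip E u) = emeasure (spec_meas ip E u) UNIV"
    using sp by (simp add: nn_integral_const)
  finally have "(\<integral>\<^sup>+t. ennreal \<bar>t\<bar> \<partial>spec_meas ip E u) \<le> emeasure (spec_meas ip E u) UNIV + (\<integral>\<^sup>+t. ennreal (t\<^sup>2) \<partial>spec_meas ip E u)" .
  also have "\<dots> < \<infinity>" using i2 fin by (simp add: less_top[symmetric])
  finally show ?thesis unfolding dom_iff[OF H S] .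
qed

end



context
  fixes sm :: "complex \<Rightarrow> 'h::ab_group_add \<Rightarrow> 'h" and ip :: "'h \<Rightarrow> 'h \<Rightarrow> complex"
    and E :: "real set \<Rightarrow> 'h \<Rightarrow> 'h"
  assumes H: "complex_hilbert sm ip"
  assumes S: "spectral_measure sm ip E"
begin

lemma eig_key: assumes u: "(u, 0) \<in> op_graph sm ip E" and v: "v \<in> form_dom ip E"
  shows "form_q ip E (u + v) = form_q ip E (u - v)"
proof -
  have "form sm ip E u v = 0" using u v unfolding op_graph_def by (auto simp: ip_zero_left[OF H])
  moreover have "Re (form sm ip E u v) = (form_q ip E (u + v) - form_q ip E (u - v)) / 4"
    unfolding form_def by (simp add: eval_nat_numeral sm_one[OF H] sm_minus_one[OF H])
  ultimately show ?thesis by simp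
qed

lemma eig_inv: assumes u: "(u, 0) \<in> op_graph sm ip E" and w: "w \<in> form_dom ip E"
  shows "form_q ip E (w + sm c u) = form_q ip E w"
proof -
  have uD: "u \<in> form_dom ip E" using u opdom_formdom[OF H S] unfolding op_graph_def by auto
  have "form_q ip E (u + u) = form_q ip E (u - u)" by (rule eig_key[OF u uD])
  moreover have "u + u = sm 2 u" using sm_add_left[OF H, of 1 1 u] by (simp add: sm_one[OF H])
  ultimately have "form_q ip E (sm 2 u) = 0" by (simp add: q_zero[OF H S])
  then have qu: "form_q ip E u = 0" using q_hom[OF H S uD, of 2] by simp
  show ?thesis
  proof (cases "c = 0")
    case True
    then show ?thesis by (simp add: sm_zero[OF H])
  next
    case False
    define v where "v = sm (1 / c) w"
    have vD: "v \<in> form_dom ip E" unfolding v_def by (rule dom_sm[OF H S w])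
    have cv: "sm c v = w" using False by (simp add: v_def sm_sm[OF H] sm_one[OF H])
    have e1: "w + sm c u = sm c (u + v)"
      unfolding sm_add_right[OF H] cv by (rule add.commute)
    have sd: "sm a (x - y) = sm a x - sm a y" for a x y
      using sm_add_right[OF H, of a x "-y"] sm_neg_right[OF H, of a y] by simp
    have e2: "w - sm c u = sm (- c) (u - v)"
      unfolding sd sm_uminus[OF H] cv by simp
    have "form_q ip E (w + sm c u) = (cmod c)^2 * form_q ip E (u + v)"
      unfolding e1 by (rule q_hom[OF H S dom_add(1)[OF H S uD vD]])
    also have "\<dots> = (cmod c)^2 * form_q ip E (u - v)" using eig_key[OF u vD] by simp
    also have "\<dots> = form_q ip E (w - sm c u)"
      unfolding e2 using q_hom[OF H S dom_add(2)[OF H S uD vD], of "-c"] by simp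
    finally have eq: "form_q ip E (w + sm c u) = form_q ip E (w - sm c u)" .
    have "form_q ip E (w + sm c u) + form_q ip E (w - sm c u) = 2 * form_q ip E w + 2 * form_q ip E (sm c u)"
      by (rule q_par[OF H S w dom_sm[OF H S uD]])
    also have "form_q ip E (sm c u) = 0" using q_hom[OF H S uD, of c] qu by simp
    finally show ?thesis using eq by simp
  qed
qed

end



theorem lemma2p10:
  fixes sm :: "complex \<Rightarrow> 'h::ab_group_add \<Rightarrow> 'h"
    and ip :: "'h \<Rightarrow> 'h \<Rightarrow> complex"
    and E :: "real \<Rightarrow> real set \<Rightarrow> 'h \<Rightarrow> 'h"
    and \<Delta> :: "real set" and D :: "'h set"
    and m :: nat and lam :: "nat \<Rightarrow> real" and u :: "nat \<Rightarrow> 'h" and c :: "nat \<Rightarrow> complex"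
    and \<mu> \<nu> :: real and y :: 'h
  assumes H: "complex_hilbert sm ip"
    and interval: "is_interval \<Delta>"
    and A1: "\<forall>l\<in>\<Delta>. spectral_measure sm ip (E l)"
    and A2: "\<forall>l\<in>\<Delta>. form_dom ip (E l) = D"
    and A3: "\<forall>x\<in>D - {0}. continuous_on \<Delta> (\<lambda>l. form_q ip (E l) x) \<and>
               (\<forall>l0\<in>\<Delta>. form_q ip (E l0) x = 0 \<longrightarrow>
                  (\<forall>l\<in>\<Delta>. l < l0 \<longrightarrow> form_q ip (E l) x > 0) \<and>
                  (\<forall>l\<in>\<Delta>. l > l0 \<longrightarrow> form_q ip (E l) x < 0))"
    and eig: "\<forall>j\<in>{1..m}. lam j \<in> \<Delta> \<and> u j \<noteq> 0 \<and> (u j, 0) \<in> op_graph sm ip (E (lam j))"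
    and munu: "\<mu> \<in> \<Delta>" "\<nu> \<in> \<Delta>" "\<mu> \<le> \<nu>"
    and order: "\<forall>j\<in>{1..m}. \<mu> \<le> lam j \<and> lam j \<le> \<nu>"
               "\<forall>i j. 1 \<le> i \<longrightarrow> i \<le> j \<longrightarrow> j \<le> m \<longrightarrow> lam i \<le> lam j"
    and yD: "y \<in> D"
  shows "(form_q ip (E \<nu>) y \<ge> 0 \<longrightarrow>
            form_q ip (E \<mu>) (y + (\<Sum>j=1..m. sm (c j) (u j))) \<ge> 0) \<and>
         (form_q ip (E \<mu>) y \<le> 0 \<longrightarrow>
            form_q ip (E \<nu>) (y + (\<Sum>j=1..m. sm (c j) (u j))) \<le> 0)"
proof -
  have S: "\<And>l. l \<in> \<Delta> \<Longrightarrow> spectral_measure sm ip (E l)" using A1 by blast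
  have Dl: "\<And>l. l \<in> \<Delta> \<Longrightarrow> form_dom ip (E l) = D" using A2 by blast
  have addD: "x + z \<in> D" if "x \<in> D" "z \<in> D" for x z
    using dom_add(1)[OF H S[OF munu(1)]] that Dl[OF munu(1)] by blast
  have smD: "sm a x \<in> D" if "x \<in> D" for a x
    using dom_sm[OF H S[OF munu(1)]] that Dl[OF munu(1)] by blast
  have zD: "0 \<in> D" using zero_dom[OF H S[OF munu(1)]] Dl[OF munu(1)] by blast
  have lamD: "lam j \<in> \<Delta>" if "j \<in> {1..m}" for j using eig that by blast
  have uD: "u j \<in> D" if "j \<in> {1..m}" for j
  proof -
    have "u j \<in> op_dom ip (E (lam j))" using eig that unfolding op_graph_def by blast
    then show ?thesis using opdom_formdom[OF H S[OF lamD[OF that]]] Dl[OF lamD[OF that]] by blast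
  qed
  have sumD: "(\<Sum>j=1..k. sm (c j) (u j)) \<in> D" if "k \<le> m" for k
    using that
  proof (induction k)
    case 0 then show ?case using zD by simp
  next
    case (Suc k)
    then show ?case using addD smD uD[of "Suc k"] by simp
  qed
  have A3x: "continuous_on \<Delta> (\<lambda>l. form_q ip (E l) x) \<and>
               (\<forall>l0\<in>\<Delta>. form_q ip (E l0) x = 0 \<longrightarrow>
                  (\<forall>l\<in>\<Delta>. l < l0 \<longrightarrow> form_q ip (E l) x > 0) \<and>
                  (\<forall>l\<in>\<Delta>. l > l0 \<longrightarrow> form_q ip (E l) x < 0))" if "x \<in> D" "x \<noteq> 0" for x
  proof -
    have "x \<in> D - {0}" using that by simp
    then show ?thesis by (rule bspec[OF A3])
  qed
  have A3c: "continuous_on \<Delta> (\<lambda>l. form_q ip (E l) x)" if "x \<in> D" "x \<noteq> 0" for x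
    using A3x[OF that] by (rule conjunct1)
  have A3l: "form_q ip (E l) x > 0" if "x \<in> D" "x \<noteq> 0" "l0 \<in> \<Delta>" "form_q ip (E l0) x = 0" "l \<in> \<Delta>" "l < l0" for x l l0
  proof -
    have "\<forall>l0\<in>\<Delta>. form_q ip (E l0) x = 0 \<longrightarrow>
                  (\<forall>l\<in>\<Delta>. l < l0 \<longrightarrow> form_q ip (E l) x > 0) \<and>
                  (\<forall>l\<in>\<Delta>. l > l0 \<longrightarrow> form_q ip (E l) x < 0)" using A3x[OF that(1,2)] by (rule conjunct2)
    then have "(\<forall>l\<in>\<Delta>. l < l0 \<longrightarrow> form_q ip (E l) x > 0)" using that(3,4) by blast
    then show ?thesis using that(5,6) by blast
  qed
  have A3r: "form_q ip (E l) x < 0" if "x \<in> D" "x \<noteq> 0" "l0 \<in> \<Delta>" "form_q ip (E l0) x = 0" "l \<in> \<Delta>" "l > l0" for x l l0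
  proof -
    have "\<forall>l0\<in>\<Delta>. form_q ip (E l0) x = 0 \<longrightarrow>
                  (\<forall>l\<in>\<Delta>. l < l0 \<longrightarrow> form_q ip (E l) x > 0) \<and>
                  (\<forall>l\<in>\<Delta>. l > l0 \<longrightarrow> form_q ip (E l) x < 0)" using A3x[OF that(1,2)] by (rule conjunct2)
    then have "(\<forall>l\<in>\<Delta>. l > l0 \<longrightarrow> form_q ip (E l) x < 0)" using that(3,4) by blast
    then show ?thesis using that(5,6) by blast
  qed
  have ivl: "{a..b} \<subseteq> \<Delta>" if ab: "a \<in> \<Delta>" "b \<in> \<Delta>" for a b
  proof
    fix x assume "x \<in> {a..b}"
    then show "x \<in> \<Delta>" using mem_is_interval_1_I[OF interval ab(1) ab(2)] by simp
  qed
  have zero_case: "form_q ip (E l) 0 = 0" if "l \<in> \<Delta>" for l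
    using q_zero[OF H S[OF that]] .
  have IVT0: "\<exists>l0. l1 \<le> l0 \<and> l0 \<le> l2 \<and> form_q ip (E l0) x = 0"
    if "x \<in> D" "x \<noteq> 0" "l1 \<in> \<Delta>" "l2 \<in> \<Delta>" "l1 \<le> l2"
       "form_q ip (E l1) x \<le> 0" "0 \<le> form_q ip (E l2) x" for x l1 l2
  proof -
    have "continuous_on \<Delta> (\<lambda>l. form_q ip (E l) x)" using A3c that by blast
    then have "continuous_on {l1..l2} (\<lambda>l. form_q ip (E l) x)"
      using ivl[OF that(3,4)] continuous_on_subset by blast
    then show ?thesis using IVT'[of "\<lambda>l. form_q ip (E l) x" l1 0 l2] that by blast
  qed
  have mono1: "form_q ip (E l1) x \<ge> 0"
    if hyp: "x \<in> D" "l1 \<in> \<Delta>" "l2 \<in> \<Delta>" "l1 \<le> l2" "form_q ip (E l2) x \<ge> 0" for x l1 l2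
  proof (rule ccontr)
    assume neg: "\<not> form_q ip (E l1) x \<ge> 0"
    show False
    proof (cases "x = 0")
      case True then show False using neg zero_case[OF hyp(2)] by simp
    next
      case False
      obtain l0 where l0: "l1 \<le> l0" "l0 \<le> l2" "form_q ip (E l0) x = 0"
        using IVT0[OF hyp(1) False hyp(2,3,4) _ hyp(5)] neg by fastforce
      have l0D: "l0 \<in> \<Delta>" using ivl[OF hyp(2,3)] l0 by auto
      have "l1 \<noteq> l0" using l0(3) neg by auto
      then have "l1 < l0" using l0 by simp
      then have "form_q ip (E l1) x > 0" by (rule A3l[OF hyp(1) False l0D l0(3) hyp(2)])
      then show False using neg by simp
    qed
  qed
  have mono2: "form_q ip (E l2) x \<le> 0"
    if hyp: "x \<in> D" "l1 \<in> \<Delta>" "l2 \<in> \<Delta>" "l1 \<le> l2" "form_q ip (E l1) x \<le> 0" for x l1 l2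
  proof (rule ccontr)
    assume neg: "\<not> form_q ip (E l2) x \<le> 0"
    show False
    proof (cases "x = 0")
      case True then show False using neg zero_case[OF hyp(3)] by simp
    next
      case False
      obtain l0 where l0: "l1 \<le> l0" "l0 \<le> l2" "form_q ip (E l0) x = 0"
        using IVT0[OF hyp(1) False hyp(2,3,4) hyp(5)] neg by fastforce
      have l0D: "l0 \<in> \<Delta>" using ivl[OF hyp(2,3)] l0 by auto
      have "l2 \<noteq> l0" using l0(3) neg by auto
      then have "l0 < l2" using l0 by simp
      then have "form_q ip (E l2) x < 0" by (rule A3r[OF hyp(1) False l0D l0(3) hyp(3)])
      then show False using neg by simp
    qed
  qed
  have step: "form_q ip (E (lam j)) (z + sm (c j) (u j)) = form_q ip (E (lam j)) z"
    if "j \<in> {1..m}" "z \<in> D" for j z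
  proof -
    have "(u j, 0) \<in> op_graph sm ip (E (lam j))" using eig that by blast
    moreover have "z \<in> form_dom ip (E (lam j))" using Dl[OF lamD[OF that(1)]] that by simp
    ultimately show ?thesis by (rule eig_inv[OF H S[OF lamD[OF that(1)]]])
  qed
  have P1: "\<forall>y\<in>D. \<forall>\<nu>'\<in>\<Delta>. (\<forall>j\<in>{1..k}. lam j \<le> \<nu>') \<longrightarrow> \<mu> \<le> \<nu>' \<longrightarrow> form_q ip (E \<nu>') y \<ge> 0
          \<longrightarrow> form_q ip (E \<mu>) (y + (\<Sum>j=1..k. sm (c j) (u j))) \<ge> 0" if "k \<le> m" for k
    using that
  proof (induction k)
    case 0
    show ?case
    proof (intro ballI impI)
      fix y \<nu>' assume y: "y \<in> D" and nu: "\<nu>' \<in> \<Delta>" and mn: "\<mu> \<le> \<nu>'" and pos: "form_q ip (E \<nu>') y \<ge> 0"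
      have "form_q ip (E \<mu>) y \<ge> 0" by (rule mono1[OF y munu(1) nu mn pos])
      then show "form_q ip (E \<mu>) (y + (\<Sum>j=1..0. sm (c j) (u j))) \<ge> 0" by simp
    qed
  next
    case (Suc k)
    have km: "k \<le> m" using Suc.prems by simp
    show ?case
    proof (intro ballI impI)
      fix y \<nu>' assume y: "y \<in> D" and nu: "\<nu>' \<in> \<Delta>" and lj: "\<forall>j\<in>{1..Suc k}. lam j \<le> \<nu>'"
        and mn: "\<mu> \<le> \<nu>'" and pos: "form_q ip (E \<nu>') y \<ge> 0"
      have k1: "Suc k \<in> {1..m}" using Suc.prems by simp
      have lnu': "lam (Suc k) \<le> \<nu>'" using lj by simp
      have p1: "form_q ip (E (lam (Suc k))) y \<ge> 0"
        by (rule mono1[OF y lamD[OF k1] nu lnu' pos])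
      have p2: "form_q ip (E (lam (Suc k))) (y + sm (c (Suc k)) (u (Suc k))) \<ge> 0"
        using p1 step[OF k1 y] by simp
      have y2: "y + sm (c (Suc k)) (u (Suc k)) \<in> D" by (rule addD[OF y smD[OF uD[OF k1]]])
      have lj2: "\<forall>j\<in>{1..k}. lam j \<le> lam (Suc k)" using order(2) Suc.prems by auto
      have ml: "\<mu> \<le> lam (Suc k)" using order(1) k1 by blast
      have "form_q ip (E \<mu>) ((y + sm (c (Suc k)) (u (Suc k))) + (\<Sum>j=1..k. sm (c j) (u j))) \<ge> 0"
        by (rule Suc.IH[OF km, rule_format, OF y2 lamD[OF k1] lj2[rule_format] ml p2])
      moreover have "(y + sm (c (Suc k)) (u (Suc k))) + (\<Sum>j=1..k. sm (c j) (u j)) = y + (\<Sum>j=1..Suc k. sm (c j) (u j))"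
        by (simp add: add_ac)
      ultimately show "form_q ip (E \<mu>) (y + (\<Sum>j=1..Suc k. sm (c j) (u j))) \<ge> 0" by metis
    qed
  qed
  have P2: "\<forall>\<nu>'\<in>\<Delta>. (\<forall>j\<in>{1..k}. lam j \<le> \<nu>') \<longrightarrow> \<mu> \<le> \<nu>'
          \<longrightarrow> form_q ip (E \<nu>') (y + (\<Sum>j=1..k. sm (c j) (u j))) \<le> 0"
    if "k \<le> m" "form_q ip (E \<mu>) y \<le> 0" for k
    using that
  proof (induction k)
    case 0
    show ?case
    proof (intro ballI impI)
      fix \<nu>' assume nu: "\<nu>' \<in> \<Delta>" and mn: "\<mu> \<le> \<nu>'"
      have "form_q ip (E \<nu>') y \<le> 0" by (rule mono2[OF yD munu(1) nu mn 0(2)])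
      then show "form_q ip (E \<nu>') (y + (\<Sum>j=1..0. sm (c j) (u j))) \<le> 0" by simp
    qed
  next
    case (Suc k)
    have km: "k \<le> m" using Suc.prems by simp
    show ?case
    proof (intro ballI impI)
      fix \<nu>' assume nu: "\<nu>' \<in> \<Delta>" and lj: "\<forall>j\<in>{1..Suc k}. lam j \<le> \<nu>'" and mn: "\<mu> \<le> \<nu>'"
      have k1: "Suc k \<in> {1..m}" using Suc.prems by simp
      have lnu': "lam (Suc k) \<le> \<nu>'" using lj by simp
      define z where "z = y + (\<Sum>j=1..k. sm (c j) (u j))"
      have zD': "z \<in> D" unfolding z_def by (rule addD[OF yD sumD[OF km]])
      have lj2: "\<forall>j\<in>{1..k}. lam j \<le> lam (Suc k)" using order(2) Suc.prems by auto
      have ml: "\<mu> \<le> lam (Suc k)" using order(1) k1 by blast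
      have "form_q ip (E (lam (Suc k))) z \<le> 0"
        unfolding z_def by (rule Suc.IH[OF km Suc.prems(2), rule_format, OF lamD[OF k1] lj2[rule_format] ml])
      then have "form_q ip (E (lam (Suc k))) (z + sm (c (Suc k)) (u (Suc k))) \<le> 0"
        using step[OF k1 zD'] by simp
      then have "form_q ip (E \<nu>') (z + sm (c (Suc k)) (u (Suc k))) \<le> 0"
        by (rule mono2[OF addD[OF zD' smD[OF uD[OF k1]]] lamD[OF k1] nu lnu'])
      moreover have "z + sm (c (Suc k)) (u (Suc k)) = y + (\<Sum>j=1..Suc k. sm (c j) (u j))"
        unfolding z_def by (simp add: add_ac)
      ultimately show "form_q ip (E \<nu>') (y + (\<Sum>j=1..Suc k. sm (c j) (u j))) \<le> 0" by metis
    qed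
  qed
  have lnu: "\<forall>j\<in>{1..m}. lam j \<le> \<nu>" using order(1) by blast
  have i: "form_q ip (E \<nu>) y \<ge> 0 \<longrightarrow> form_q ip (E \<mu>) (y + (\<Sum>j=1..m. sm (c j) (u j))) \<ge> 0"
  proof
    assume "form_q ip (E \<nu>) y \<ge> 0"
    from P1[OF order_refl, rule_format, OF yD munu(2) lnu[rule_format] munu(3) this]
    show "form_q ip (E \<mu>) (y + (\<Sum>j=1..m. sm (c j) (u j))) \<ge> 0" .
  qed
  have ii: "form_q ip (E \<mu>) y \<le> 0 \<longrightarrow> form_q ip (E \<nu>) (y + (\<Sum>j=1..m. sm (c j) (u j))) \<le> 0"
  proof
    assume "form_q ip (E \<mu>) y \<le> 0"
    from P2[OF order_refl this, rule_format, OF munu(2) lnu[rule_format] munu(3)]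
    show "form_q ip (E \<nu>) (y + (\<Sum>j=1..m. sm (c j) (u j))) \<le> 0" .
  qed
  from i ii show ?thesis by (rule conjI)
qed


end
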